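(* Let $(\mathcal{J}_g)_{g\in[G]}$ be nonempty subsets of $[p]$, $p_g=|\mathcal{J}_g|$, $p_*=\min_gp_g$. Let $W$ be a $p\times n$ random matrix with independent $N(0,\sigma^2)$ entries and $E=\mathcal{T}(W)$. For any $\delta\in(0,1)$ and $\lambda=\sigma\bigl(1+\sqrt{2p_*^{-1}\log(1/\delta)}\bigr)$, \[ \mathbb{P}(\|E\|_{\mathrm{grp}*}>\lambda)\le(n-1)G\delta. \]
   Context: CUSUM transformation $\mathcal{T}:\mathbb{R}^{p\times n}\to\mathbb{R}^{p\times(n-1)}$: $\mathcal{T}(M)_{j,t}=\sqrt{t(n-t)/n}\bigl(\frac{1}{n-t}\sum_{r=t+1}^nM_{j,r}-\frac1t\sum_{r=1}^tM_{j,r}\bigr)$. $\|R\|_{\mathrm{grp}*}=\max_{g\in[G]}\max_{t\in[n-1]}p_g^{-1/2}\|R_{\mathcal{J}_g,t}\|_2$, where $R_{\mathcal{J}_g,t}$ is the vector of entries of the $t$th column of $R$ with rows in $\mathcal{J}_g$. *)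

theory Defs
  imports "HOL-Probability.Probability"
begin

text \<open>Matrices are functions nat => nat => real, rows indexed 1..p, columns 1..n.\<close>

definition cusum :: "nat \<Rightarrow> (nat \<Rightarrow> nat \<Rightarrow> real) \<Rightarrow> nat \<Rightarrow> nat \<Rightarrow> real" where
  "cusum n M j t =
     sqrt (real t * real (n - t) / real n) *
       ((1 / real (n - t)) * (\<Sum>r\<in>{t+1..n}. M j r) - (1 / real t) * (\<Sum>r\<in>{1..t}. M j r))"

definition grp_star_norm :: "(nat \<Rightarrow> nat set) \<Rightarrow> nat \<Rightarrow> nat \<Rightarrow> (nat \<Rightarrow> nat \<Rightarrow> real) \<Rightarrow> real" where
  "grp_star_norm J G n R =
     Max {(1 / sqrt (real (card (J g)))) * sqrt (\<Sum>j\<in>J g. (R j t)\<^sup>2) | g t. g \<in> {1..G} \<and> t \<in> {1..n-1}}"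

end

theory Submission
  imports Defs
begin

lemma nd_exp:
  fixes s a x :: real
  assumes "s > 0" "1 - 2 * a * s^2 > 0"
  shows "normal_density 0 s x * exp (a * x^2) =
         (1 / sqrt (1 - 2 * a * s^2)) * normal_density 0 (s / sqrt (1 - 2 * a * s^2)) x"
proof -
  define b where "b = 1 - 2 * a * s^2"
  have b: "b > 0" using assms b_def by simp
  have e: "- x\<^sup>2 / (2 * s\<^sup>2) + a * x^2 = - x\<^sup>2 / (2 * (s / sqrt b)\<^sup>2)"
    using b assms by (simp add: power_divide b_def field_simps)
  have r: "sqrt (2 * pi * (s / sqrt b)\<^sup>2) = sqrt (2 * pi * s^2) / sqrt b"
    using b by (simp add: power_divide real_sqrt_divide)
  have "normal_density 0 s x * exp (a * x^2) = 1 / sqrt (2 * pi * s\<^sup>2) * exp (- x\<^sup>2 / (2 * s\<^sup>2) + a * x^2)"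
    by (simp add: normal_density_def mult_exp_exp)
  also have "\<dots> = 1 / sqrt (2 * pi * s\<^sup>2) * exp (- x\<^sup>2 / (2 * (s / sqrt b)\<^sup>2))" by (simp only: e)
  also have "\<dots> = (1 / sqrt b) * normal_density 0 (s / sqrt b) x"
    unfolding normal_density_def r using b by simp
  finally show ?thesis by (simp add: b_def)
qed

lemma mgf_sq:
  fixes M :: "'a measure" and X :: "'a \<Rightarrow> real"
  assumes D: "distributed M lborel X (normal_density 0 s)" and "s > 0" "1 - 2 * a * s^2 > 0"
  shows "integrable M (\<lambda>\<omega>. exp (a * (X \<omega>)^2))"
    and "(\<integral>\<omega>. exp (a * (X \<omega>)^2) \<partial>M) = 1 / sqrt (1 - 2 * a * s^2)"
proof -
  have eq: "(\<lambda>x. normal_density 0 s x * exp (a * x^2)) =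
         (\<lambda>x. (1 / sqrt (1 - 2 * a * s^2)) * normal_density 0 (s / sqrt (1 - 2 * a * s^2)) x)"
    using nd_exp[OF assms(2,3)] by auto
  have "integrable lborel (\<lambda>x. normal_density 0 s x * exp (a * x^2))"
    unfolding eq using assms by (intro integrable_mult_right integrable_normal_density) simp
  then show "integrable M (\<lambda>\<omega>. exp (a * (X \<omega>)^2))"
    using distributed_integrable[OF D, of "\<lambda>x. exp (a * x^2)"] by simp
  have "(\<integral>x. normal_density 0 s x * exp (a * x^2) \<partial>lborel) = 1 / sqrt (1 - 2 * a * s^2)"
    unfolding eq using assms by (simp add: integral_normal_density)
  then show "(\<integral>\<omega>. exp (a * (X \<omega>)^2) \<partial>M) = 1 / sqrt (1 - 2 * a * s^2)"
    using distributed_integral[OF D, of "\<lambda>x. exp (a * x^2)"] by simp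
qed


lemma (in prob_space) chi_tail:
  fixes Y :: "nat \<Rightarrow> 'a \<Rightarrow> real"
  assumes K: "finite K"
    and ind: "indep_vars (\<lambda>_. borel) Y K"
    and D: "\<And>j. j \<in> K \<Longrightarrow> distributed M lborel (Y j) (normal_density 0 s)"
    and s: "s > 0" and u: "u > 0"
  shows "{\<omega>\<in>space M. s^2 * real (card K) * (1+u)^2 < (\<Sum>j\<in>K. (Y j \<omega>)^2)} \<in> events"
    and "prob {\<omega>\<in>space M. s^2 * real (card K) * (1+u)^2 < (\<Sum>j\<in>K. (Y j \<omega>)^2)}
           \<le> exp (- real (card K) * u^2 / 2)"
proof -
  define k where "k = real (card K)"
  have Ym[measurable]: "Y j \<in> borel_measurable M" if "j \<in> K" for j
    using distributed_measurable[OF D[OF that]] by simp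
  show ev: "{\<omega>\<in>space M. s^2 * real (card K) * (1+u)^2 < (\<Sum>j\<in>K. (Y j \<omega>)^2)} \<in> events"
    using Ym by measurable
  define a where "a = (1 - 1/(1+u)^2) / (2 * s^2)"
  have q: "1 - 2 * a * s^2 = 1/(1+u)^2" using s by (simp add: a_def field_simps)
  have qpos: "1 - 2 * a * s^2 > 0" unfolding q using u by simp
  have sq: "1 / sqrt (1 - 2 * a * s^2) = 1 + u" unfolding q using u
    by (simp add: real_sqrt_divide)
  have "1 < (1+u)^2" using u by (simp add: power2_eq_square algebra_simps add_pos_pos)
  then have "1/(1+u)^2 < 1" by (simp add: divide_less_eq)
  then have apos: "a > 0" using s unfolding a_def by simp
  define f where "f \<omega> = (\<Prod>j\<in>K. exp (a * (Y j \<omega>)^2))" for \<omega>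
  have indf: "indep_vars (\<lambda>_. borel) (\<lambda>j \<omega>. exp (a * (Y j \<omega>)^2)) K"
    by (rule indep_vars_compose2[OF ind]) simp
  have intj: "integrable M (\<lambda>\<omega>. exp (a * (Y j \<omega>)^2))" if "j \<in> K" for j
    using mgf_sq(1)[OF D[OF that] s qpos] .
  have intf: "integrable M f" unfolding f_def
    by (rule indep_vars_integrable[OF K indf intj])
  have Ef: "(\<integral>\<omega>. f \<omega> \<partial>M) = (1+u)^card K" unfolding f_def
    using indep_vars_lebesgue_integral[OF K indf intj] mgf_sq(2)[OF D s qpos] sq
    by simp
  define T where "T = s^2 * k * (1+u)^2"
  have sub: "{\<omega>\<in>space M. s^2 * real (card K) * (1+u)^2 < (\<Sum>j\<in>K. (Y j \<omega>)^2)}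
      \<subseteq> {\<omega>\<in>space M. exp (a * T) \<le> f \<omega>}"
  proof safe
    fix \<omega> assume "\<omega> \<in> space M" "s^2 * real (card K) * (1+u)^2 < (\<Sum>j\<in>K. (Y j \<omega>)^2)"
    then have "a * T \<le> a * (\<Sum>j\<in>K. (Y j \<omega>)^2)" using apos unfolding T_def k_def by simp
    then have "exp (a * T) \<le> exp (a * (\<Sum>j\<in>K. (Y j \<omega>)^2))" by simp
    also have "\<dots> = f \<omega>" unfolding f_def sum_distrib_left exp_sum[OF K] ..
    finally show "exp (a * T) \<le> f \<omega>" .
  qed
  have fm[measurable]: "f \<in> borel_measurable M" unfolding f_def by measurable
  have "prob {\<omega>\<in>space M. s^2 * real (card K) * (1+u)^2 < (\<Sum>j\<in>K. (Y j \<omega>)^2)}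
        \<le> prob {\<omega>\<in>space M. exp (a * T) \<le> f \<omega>}"
    by (rule finite_measure_mono[OF sub]) measurable
  also have "\<dots> \<le> (\<integral>\<omega>. f \<omega> \<partial>M) / exp (a * T)"
    by (rule integral_Markov_inequality_measure[OF intf, of "space M"])
       (auto simp: f_def intro!: prod_nonneg)
  also have "\<dots> = (1+u)^card K / exp (k * (2*u + u^2) / 2)"
  proof -
    define w where "w = (1+u)^2"
    have w: "w > 0" unfolding w_def using u by simp
    have "a * T = (w - 1) * k / 2" unfolding a_def T_def w_def[symmetric] using s w
      by (simp add: field_simps)
    also have "w - 1 = 2*u + u^2" unfolding w_def by (simp add: power2_eq_square algebra_simps)
    finally have "a * T = k * (2*u + u^2) / 2" by simp
    then show ?thesis using Ef by simp
  qed
  also have "\<dots> \<le> exp u ^ card K / exp (k * (2*u + u^2) / 2)"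
    by (intro divide_right_mono power_mono) (use u in \<open>auto simp: exp_ge_add_one_self add.commute\<close>)
  also have "\<dots> = exp (- k * u^2 / 2)"
    unfolding k_def exp_of_nat_mult[symmetric] by (simp add: exp_diff[symmetric] field_simps power2_eq_square)
  finally show "prob {\<omega>\<in>space M. s^2 * real (card K) * (1+u)^2 < (\<Sum>j\<in>K. (Y j \<omega>)^2)}
           \<le> exp (- real (card K) * u^2 / 2)" unfolding k_def .
qed


definition cc :: "nat \<Rightarrow> nat \<Rightarrow> nat \<Rightarrow> real" where
  "cc n t r = sqrt (real t * real (n - t) / real n) * (if r \<le> t then - 1 / real t else 1 / real (n - t))"

lemma cusum_lin:
  assumes "1 \<le> t" "t < n"
  shows "cusum n A j t = (\<Sum>r\<in>{1..n}. cc n t r * A j r)"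
proof -
  have U: "{1..n} = {1..t} \<union> {t+1..n}" using assms by auto
  have "(\<Sum>r\<in>{1..n}. cc n t r * A j r) = (\<Sum>r\<in>{1..t}. cc n t r * A j r) + (\<Sum>r\<in>{t+1..n}. cc n t r * A j r)"
    unfolding U by (rule sum.union_disjoint) auto
  also have "(\<Sum>r\<in>{1..t}. cc n t r * A j r) = (\<Sum>r\<in>{1..t}. sqrt (real t * real (n - t) / real n) * (- 1 / real t) * A j r)"
    by (rule sum.cong) (auto simp: cc_def)
  also have "(\<Sum>r\<in>{t+1..n}. cc n t r * A j r) = (\<Sum>r\<in>{t+1..n}. sqrt (real t * real (n - t) / real n) * (1 / real (n - t)) * A j r)"
    by (rule sum.cong) (auto simp: cc_def)
  also have "(\<Sum>r\<in>{1..t}. sqrt (real t * real (n - t) / real n) * (- 1 / real t) * A j r)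
     = sqrt (real t * real (n - t) / real n) * (- 1 / real t) * (\<Sum>r\<in>{1..t}. A j r)"
    by (rule sum_distrib_left[symmetric])
  also have "(\<Sum>r\<in>{t+1..n}. sqrt (real t * real (n - t) / real n) * (1 / real (n - t)) * A j r)
     = sqrt (real t * real (n - t) / real n) * (1 / real (n - t)) * (\<Sum>r\<in>{t+1..n}. A j r)"
    by (rule sum_distrib_left[symmetric])
  finally have e: "(\<Sum>r\<in>{1..n}. cc n t r * A j r) =
    sqrt (real t * real (n - t) / real n) * (- 1 / real t) * (\<Sum>r\<in>{1..t}. A j r) +
    sqrt (real t * real (n - t) / real n) * (1 / real (n - t)) * (\<Sum>r\<in>{t+1..n}. A j r)" .
  show ?thesis unfolding cusum_def e by (simp add: algebra_simps)
qed

lemma cc_sq: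
  assumes "1 \<le> t" "t < n"
  shows "(\<Sum>r\<in>{1..n}. (cc n t r)^2) = 1"
proof -
  define c where "c = real t * real (n - t) / real n"
  have c0: "c \<ge> 0" unfolding c_def by simp
  have U: "{1..n} = {1..t} \<union> {t+1..n}" using assms by auto
  have "(\<Sum>r\<in>{1..n}. (cc n t r)^2) = (\<Sum>r\<in>{1..t}. (cc n t r)^2) + (\<Sum>r\<in>{t+1..n}. (cc n t r)^2)"
    unfolding U by (rule sum.union_disjoint) auto
  also have "(\<Sum>r\<in>{1..t}. (cc n t r)^2) = (\<Sum>r\<in>{1..t}. c / (real t)^2)"
    by (rule sum.cong) (use assms in \<open>auto simp: cc_def c_def power_mult_distrib power_divide\<close>)
  also have "(\<Sum>r\<in>{t+1..n}. (cc n t r)^2) = (\<Sum>r\<in>{t+1..n}. c / (real (n - t))^2)"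
    by (rule sum.cong) (use assms in \<open>auto simp: cc_def c_def power_mult_distrib power_divide\<close>)
  finally have "(\<Sum>r\<in>{1..n}. (cc n t r)^2) = real t * (c / (real t)^2) + real (n - t) * (c / (real (n - t))^2)"
    using assms by (simp add: of_nat_diff)
  also have "\<dots> = 1"
  proof -
    have g: "x * ((x * y / z) / x^2) + y * ((x * y / z) / y^2) = 1"
      if "x > 0" "y > 0" "z = x + y" for x y z :: real
    proof -
      have "x * ((x * y / z) / x^2) = y / z" using that by (simp add: power2_eq_square)
      moreover have "y * ((x * y / z) / y^2) = x / z" using that by (simp add: power2_eq_square)
      moreover have "y / z + x / z = 1" using that by (simp add: add_divide_distrib[symmetric])
      ultimately show ?thesis by simp
    qed
    show ?thesis unfolding c_def
      by (rule g) (use assms in \<open>auto simp: of_nat_diff\<close>)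
  qed
  finally show ?thesis .
qed

lemma cc_ne:
  assumes "1 \<le> t" "t < n"
  shows "cc n t r \<noteq> 0"
  using assms by (auto simp: cc_def)


lemma (in prob_space) cusum_normal:
  fixes W :: "'a \<Rightarrow> nat \<Rightarrow> nat \<Rightarrow> real"
  assumes ind: "indep_vars (\<lambda>_. borel) (\<lambda>(j, t) \<omega>. W \<omega> j t) ({1..p} \<times> {1..n})"
    and D: "\<And>j t. j \<in> {1..p} \<Longrightarrow> t \<in> {1..n} \<Longrightarrow>
           distributed M lborel (\<lambda>\<omega>. W \<omega> j t) (normal_density 0 \<sigma>)"
    and s: "\<sigma> > 0" and t: "1 \<le> t" "t < n" and j: "j \<in> {1..p}"
  shows "distributed M lborel (\<lambda>\<omega>. cusum n (W \<omega>) j t) (normal_density 0 \<sigma>)"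
proof -
  define I where "I = {j} \<times> {1..n}"
  have IP: "I = Pair j ` {1..n}" unfolding I_def by auto
  have I: "finite I" "I \<noteq> {}" "I \<subseteq> {1..p} \<times> {1..n}" using j t unfolding I_def by auto
  have ind1: "indep_vars (\<lambda>_. borel) (\<lambda>i \<omega>. cc n t (snd i) * (case i of (j, t) \<Rightarrow> \<lambda>\<omega>. W \<omega> j t) \<omega>) I"
    by (rule indep_vars_compose2[OF indep_vars_subset[OF ind I(3)]]) simp
  have ind2: "indep_vars (\<lambda>_. borel) (\<lambda>i \<omega>. cc n t (snd i) * W \<omega> (fst i) (snd i)) I"
    using ind1 by (rule iffD1[OF indep_vars_cong, rotated 3]) (auto split: prod.splits)
  have nd: "distributed M lborel (\<lambda>\<omega>. cc n t (snd i) * W \<omega> (fst i) (snd i))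
              (normal_density 0 (\<bar>cc n t (snd i)\<bar> * \<sigma>))" if "i \<in> I" for i
  proof -
    have "distributed M lborel (\<lambda>\<omega>. 0 + cc n t (snd i) * W \<omega> (fst i) (snd i))
              (normal_density (0 + cc n t (snd i) * 0) (\<bar>cc n t (snd i)\<bar> * \<sigma>))"
      by (rule normal_density_affine[OF D s cc_ne[OF t]]) (use that I(3) in auto)
    then show ?thesis by simp
  qed
  have "distributed M lborel (\<lambda>\<omega>. \<Sum>i\<in>I. cc n t (snd i) * W \<omega> (fst i) (snd i))
     (normal_density (\<Sum>i\<in>I. 0) (sqrt (\<Sum>i\<in>I. (\<bar>cc n t (snd i)\<bar> * \<sigma>)\<^sup>2)))"
    by (rule sum_indep_normal[OF I(1,2) ind2 _ nd]) (use s cc_ne[OF t] in auto)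
  moreover have "(\<lambda>\<omega>. \<Sum>i\<in>I. cc n t (snd i) * W \<omega> (fst i) (snd i)) = (\<lambda>\<omega>. cusum n (W \<omega>) j t)"
  proof
    fix \<omega>
    have "(\<Sum>i\<in>I. cc n t (snd i) * W \<omega> (fst i) (snd i)) = (\<Sum>r\<in>{1..n}. cc n t r * W \<omega> j r)"
      unfolding IP by (simp add: sum.reindex inj_on_def)
    then show "(\<Sum>i\<in>I. cc n t (snd i) * W \<omega> (fst i) (snd i)) = cusum n (W \<omega>) j t"
      using cusum_lin[OF t] by simp
  qed
  moreover have "sqrt (\<Sum>i\<in>I. (\<bar>cc n t (snd i)\<bar> * \<sigma>)\<^sup>2) = \<sigma>"
  proof -
    have "(\<Sum>i\<in>I. (\<bar>cc n t (snd i)\<bar> * \<sigma>)\<^sup>2) = \<sigma>^2 * (\<Sum>r\<in>{1..n}. (cc n t r)^2)"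
      unfolding IP by (simp add: sum.reindex inj_on_def sum_distrib_left power_mult_distrib mult.commute)
    then show ?thesis using cc_sq[OF t] s by simp
  qed
  ultimately show ?thesis by simp
qed

lemma (in prob_space) cusum_indep:
  fixes W :: "'a \<Rightarrow> nat \<Rightarrow> nat \<Rightarrow> real"
  assumes ind: "indep_vars (\<lambda>_. borel) (\<lambda>(j, t) \<omega>. W \<omega> j t) ({1..p} \<times> {1..n})"
    and t: "1 \<le> t" "t < n"
  shows "indep_vars (\<lambda>_. borel) (\<lambda>j \<omega>. cusum n (W \<omega>) j t) {1..p}"
proof -
  define X0 where "X0 = (\<lambda>(j, t) \<omega>. W \<omega> j t :: real)"
  have r: "indep_vars (\<lambda>j. PiM ({j} \<times> {1..n}) (\<lambda>_. borel))
      (\<lambda>j \<omega>. restrict (\<lambda>i. X0 i \<omega>) ({j} \<times> {1..n})) {1..p}"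
    by (rule indep_vars_restrict[OF ind[folded X0_def]]) (auto simp: disjoint_family_on_def)
  have c: "indep_vars (\<lambda>_. borel)
      (\<lambda>j \<omega>. (\<lambda>f. \<Sum>r\<in>{1..n}. cc n t r * f (j, r)) (restrict (\<lambda>i. X0 i \<omega>) ({j} \<times> {1..n}))) {1..p}"
    by (rule indep_vars_compose2[OF r])
       (intro borel_measurable_sum borel_measurable_times measurable_const measurable_component_singleton, auto)
  show ?thesis
    using c by (rule iffD1[OF indep_vars_cong, rotated 3])
      (auto simp: X0_def cusum_lin[OF t] intro!: sum.cong)
qed


theorem mainTheorem9:
  fixes M :: "'a measure" and W :: "'a \<Rightarrow> nat \<Rightarrow> nat \<Rightarrow> real"
    and J :: "nat \<Rightarrow> nat set" and p n G :: nat and \<sigma> \<delta> :: real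
  assumes "prob_space M"
    and "n \<ge> 2" and "G \<ge> 1"
    and "\<And>g. g \<in> {1..G} \<Longrightarrow> J g \<subseteq> {1..p} \<and> J g \<noteq> {}"
    and "\<sigma> > 0"
    and "prob_space.indep_vars M (\<lambda>_. borel) (\<lambda>(j, t) \<omega>. W \<omega> j t) ({1..p} \<times> {1..n})"
    and "\<And>j t. j \<in> {1..p} \<Longrightarrow> t \<in> {1..n} \<Longrightarrow>
           distributed M lborel (\<lambda>\<omega>. W \<omega> j t) (normal_density 0 \<sigma>)"
    and "0 < \<delta>" and "\<delta> < 1"
  shows "measure M {\<omega> \<in> space M.
            grp_star_norm J G n (cusum n (W \<omega>)) >
              \<sigma> * (1 + sqrt (2 * ln (1 / \<delta>) / real (Min ((\<lambda>g. card (J g)) ` {1..G}))))}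
         \<le> real (n - 1) * real G * \<delta>"
proof -
  interpret prob_space M by fact
  note ind = assms(6) and D = assms(7) and s = assms(5)
  define L where "L = ln (1 / \<delta>)"
  have Lpos: "L > 0" unfolding L_def using assms(8,9) by simp
  define ps where "ps = Min ((\<lambda>g. card (J g)) ` {1..G})"
  have Jfin: "finite (J g)" "J g \<noteq> {}" "J g \<subseteq> {1..p}" if "g \<in> {1..G}" for g
    using assms(4)[OF that] finite_subset[of "J g" "{1..p}"] by auto
  have kpos: "card (J g) > 0" if "g \<in> {1..G}" for g using Jfin[OF that] by auto
  have ps_le: "ps \<le> card (J g)" if "g \<in> {1..G}" for g unfolding ps_def using that by simp
  have ps_pos: "ps > 0" unfolding ps_def using assms(3) kpos by (subst Min_gr_iff) auto
  define lam where "lam = \<sigma> * (1 + sqrt (2 * L / real ps))"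
  define u where "u g = sqrt (2 * L / real (card (J g)))" for g
  define B where "B g t = {\<omega>\<in>space M. \<sigma>^2 * real (card (J g)) * (1 + u g)^2 <
      (\<Sum>j\<in>J g. (cusum n (W \<omega>) j t)^2)}" for g t
  define I where "I = {1..G} \<times> {1..n-1}"
  have Ifin: "finite I" unfolding I_def by simp
  have Bprops: "B g t \<in> events \<and> prob (B g t) \<le> \<delta>" if g: "g \<in> {1..G}" and t: "t \<in> {1..n-1}" for g t
  proof -
    have t': "1 \<le> t" "t < n" using t assms(2) by auto
    have upos: "u g > 0" unfolding u_def using Lpos kpos[OF g] by simp
    have indY: "indep_vars (\<lambda>_. borel) (\<lambda>j \<omega>. cusum n (W \<omega>) j t) (J g)"
      by (rule indep_vars_subset[OF cusum_indep[OF ind t'] Jfin(3)[OF g]])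
    have DY: "distributed M lborel (\<lambda>\<omega>. cusum n (W \<omega>) j t) (normal_density 0 \<sigma>)" if "j \<in> J g" for j
      by (rule cusum_normal[OF ind D s t']) (use that Jfin(3)[OF g] in auto)
    note ct = chi_tail[OF Jfin(1)[OF g] indY DY s upos]
    have "exp (- real (card (J g)) * (u g)^2 / 2) = \<delta>"
    proof -
      have "(u g)^2 = 2 * L / real (card (J g))" unfolding u_def
        using Lpos by (simp add: real_sqrt_pow2)
      then have "- real (card (J g)) * (u g)^2 / 2 = - L" using kpos[OF g] by simp
      also have "- L = ln \<delta>" unfolding L_def using assms(8) by (simp add: ln_div)
      finally show ?thesis using assms(8) by simp
    qed
    then show ?thesis using ct unfolding B_def by simp
  qed
  have sub: "{\<omega> \<in> space M. grp_star_norm J G n (cusum n (W \<omega>)) > lam} \<subseteq> (\<Union>i\<in>I. B (fst i) (snd i))"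
  proof safe
    fix \<omega> assume om: "\<omega> \<in> space M" and gt: "grp_star_norm J G n (cusum n (W \<omega>)) > lam"
    define f where "f g t = (1 / sqrt (real (card (J g)))) * sqrt (\<Sum>j\<in>J g. (cusum n (W \<omega>) j t)\<^sup>2)" for g t
    have Seq: "{(1 / sqrt (real (card (J g)))) * sqrt (\<Sum>j\<in>J g. (cusum n (W \<omega>) j t)\<^sup>2) | g t. g \<in> {1..G} \<and> t \<in> {1..n-1}}
       = (\<lambda>i. f (fst i) (snd i)) ` I" (is "?A = ?B")
    proof
      show "?A \<subseteq> ?B" unfolding I_def f_def by (auto intro!: image_eqI[where x="(g, t)" for g t])
      show "?B \<subseteq> ?A" unfolding I_def f_def by (auto intro!: exI)
    qed
    have "I \<noteq> {}" unfolding I_def using assms(2,3) by auto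
    then have "Max ((\<lambda>i. f (fst i) (snd i)) ` I) > lam" using gt unfolding grp_star_norm_def Seq by simp
    then obtain i where i: "i \<in> I" and fi: "f (fst i) (snd i) > lam"
      using Ifin \<open>I \<noteq> {}\<close> by (subst (asm) Max_gr_iff) auto
    define g where "g = fst i"
    define t where "t = snd i"
    have g: "g \<in> {1..G}" using i unfolding I_def g_def by auto
    define k where "k = real (card (J g))"
    define Q where "Q = (\<Sum>j\<in>J g. (cusum n (W \<omega>) j t)\<^sup>2)"
    have kp: "k > 0" unfolding k_def using kpos[OF g] by simp
    have Q0: "Q \<ge> 0" unfolding Q_def by (simp add: sum_nonneg)
    have "sqrt (2 * L / k) \<le> sqrt (2 * L / real ps)"
      unfolding k_def using ps_le[OF g] ps_pos Lpos by (simp add: frac_le)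
    then have "\<sigma> * (1 + u g) \<le> lam" unfolding lam_def u_def k_def[symmetric] using s by simp
    also have "lam < sqrt Q / sqrt k" using fi unfolding f_def Q_def k_def g_def t_def by simp
    finally have "\<sigma> * (1 + u g) * sqrt k < sqrt Q" using kp by (simp add: field_simps)
    moreover have "0 \<le> \<sigma> * (1 + u g) * sqrt k" using s kp Lpos unfolding u_def by (intro mult_nonneg_nonneg add_nonneg_nonneg) auto
    ultimately have "(\<sigma> * (1 + u g) * sqrt k)^2 < (sqrt Q)^2"
      by (intro power_strict_mono) auto
    then have "\<sigma>^2 * k * (1 + u g)^2 < Q" using Q0 kp by (simp add: power_mult_distrib mult_ac)
    then have "\<omega> \<in> B g t" unfolding B_def Q_def k_def using om by simp
    then show "\<omega> \<in> (\<Union>i\<in>I. B (fst i) (snd i))" using i unfolding g_def t_def by blast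
  qed
  have UB: "(\<Union>i\<in>I. B (fst i) (snd i)) \<in> events"
    using Bprops Ifin unfolding I_def by (intro sets.finite_UN) auto
  have "measure M {\<omega> \<in> space M. grp_star_norm J G n (cusum n (W \<omega>)) > lam}
       \<le> measure M (\<Union>i\<in>I. B (fst i) (snd i))"
    by (rule finite_measure_mono[OF sub UB])
  also have "\<dots> \<le> (\<Sum>i\<in>I. measure M (B (fst i) (snd i)))"
    by (rule measure_UNION_le[OF Ifin]) (use Bprops in \<open>auto simp: I_def\<close>)
  also have "\<dots> \<le> (\<Sum>i\<in>I. \<delta>)"
    by (rule sum_mono) (use Bprops in \<open>auto simp: I_def\<close>)
  also have "\<dots> = real (n - 1) * real G * \<delta>" unfolding I_def by simp
  finally show ?thesis unfolding lam_def L_def ps_def .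
qed

end
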